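(* Let $r$ and $n$ be positive integers, let $p\in\mathbb C$ with $\operatorname{Re}(r(p+1))>1$, and let $t\in\mathbb C$ with $|t|\le1$. Then $$M_r(t;n):=\sum_{k\ge1}\frac{M_r(t;n,k)}{k^{rp}}=\frac{\mathrm{Li}_{rp+r}(t)}{\zeta(rp+r)}\,\sigma_{-p}(n,r).$$
   Context: For positive integers $a,b,r$, $(a,b)_r$ denotes the largest $r$-th power dividing both $a$ and $b$. The $r$-Ramanujan sum is $c_r(n,k):=\sum_{1\le m\le k^r,\ (m,k^r)_r=1}e^{2\pi i mn/k^r}$, and $M_r(t;n,k):=\frac{1}{k^r}\sum_{d\mid k}c_r(n,k/d)\,t^d$. $\mathrm{Li}_s(t):=\sum_{k\ge1}t^k/k^s$ is the polylogarithm, $\zeta$ the Riemann zeta function, and $\sigma_p(n,r):=\sum_{d\ge1,\ d^r\mid n}d^{rp}$. *)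

theory Defs
  imports "HOL-Analysis.Analysis"
begin

definition gcd_pow :: "nat \<Rightarrow> nat \<Rightarrow> nat \<Rightarrow> nat" where
  "gcd_pow r a b = (GREATEST e. (\<exists>d. e = d ^ r) \<and> e dvd a \<and> e dvd b)"

definition ramanujan_r :: "nat \<Rightarrow> nat \<Rightarrow> nat \<Rightarrow> complex" where
  "ramanujan_r r n k =
     (\<Sum>m\<in>{m. 1 \<le> m \<and> m \<le> k ^ r \<and> gcd_pow r m (k ^ r) = 1}.
        exp (2 * of_real pi * \<i> * of_nat m * of_nat n / of_nat (k ^ r)))"

definition M_r :: "nat \<Rightarrow> complex \<Rightarrow> nat \<Rightarrow> nat \<Rightarrow> complex" where
  "M_r r t n k = (1 / of_nat (k ^ r)) * (\<Sum>d\<in>{d. d dvd k}. ramanujan_r r n (k div d) * t ^ d)"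

definition polylog :: "complex \<Rightarrow> complex \<Rightarrow> complex" where
  "polylog s t = (\<Sum>k. t ^ Suc k / of_nat (Suc k) powr s)"

text \<open>Riemann zeta function via its Dirichlet series (used only for Re s > 1).\<close>
definition zeta_fun :: "complex \<Rightarrow> complex" where
  "zeta_fun s = (\<Sum>k. 1 / of_nat (Suc k) powr s)"

definition sigma_r :: "complex \<Rightarrow> nat \<Rightarrow> nat \<Rightarrow> complex" where
  "sigma_r p n r = (\<Sum>d\<in>{d. 1 \<le> d \<and> d ^ r dvd n}. of_nat d powr (of_nat r * p))"

end

theory Submission
  imports Defs
begin


lemma npow: "0 < a \<Longrightarrow> (of_nat a :: complex) powr s = exp (s * of_real (ln (real a)))"
  by (simp add: powr_def)

lemma npow_mult:
  assumes "0 < a" "0 < b"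
  shows "(of_nat (a*b) :: complex) powr s = of_nat a powr s * of_nat b powr s"
proof -
  have "(of_nat (a*b) :: complex) powr s = exp (s * of_real (ln (real (a*b))))"
    by (rule npow) (use assms in simp)
  also have "\<dots> = exp (s * of_real (ln (real a))) * exp (s * of_real (ln (real b)))"
    using assms by (simp add: ln_mult exp_add[symmetric] distrib_left)
  finally show ?thesis using assms by (simp add: npow del: of_nat_mult)
qed

lemma norm_npow: "0 < a \<Longrightarrow> norm ((of_nat a :: complex) powr s) = real a powr Re s"
  by (subst norm_powr_real_powr) auto

lemma summable_bound:
  fixes f :: "nat \<Rightarrow> complex"
  assumes "1 < \<sigma>" "\<And>j. j \<ge> 1 \<Longrightarrow> norm (f j) \<le> C * real j powr (-\<sigma>)"
  shows "f summable_on {1..}"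
proof -
  have "summable (\<lambda>n. real n powr (-\<sigma>))"
    using assms(1) by (subst summable_real_powr_iff) auto
  hence "summable (\<lambda>n. norm (C * real n powr (-\<sigma>)))"
    by (simp add: abs_mult summable_mult)
  hence "(\<lambda>n. C * real n powr (-\<sigma>)) summable_on UNIV"
    by (rule norm_summable_imp_summable_on)
  hence h: "(\<lambda>n. C * real n powr (-\<sigma>)) summable_on {1..}"
    by (rule summable_on_subset_banach) auto
  have "(\<lambda>x. norm (f x)) summable_on {1..}"
    using Infinite_Sum.abs_summable_on_comparison_test'[OF h, of f] assms(2) by auto
  thus ?thesis by (simp add: summable_on_iff_abs_summable_on_complex)
qed

lemma prod_has_sum:
  fixes f g :: "'a \<Rightarrow> complex"
  assumes f: "(f has_sum a) A" and g: "(g has_sum b) B"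
  shows "((\<lambda>(x,y). f x * g y) has_sum (a*b)) (A \<times> B)"
proof (rule has_sum_SigmaI)
  show "((\<lambda>y. case (x, y) of (x, y) \<Rightarrow> f x * g y) has_sum f x * b) B" if "x \<in> A" for x
    using has_sum_cmult_right[OF g, of "f x"] by simp
  show "((\<lambda>x. f x * b) has_sum a * b) A"
    using has_sum_cmult_left[OF f] by simp
  have fa: "(\<lambda>x. norm (f x)) summable_on A" "(\<lambda>x. norm (g x)) summable_on B"
    using f g summable_on_iff_abs_summable_on_complex by (auto simp: summable_on_def)
  have "(\<lambda>z. norm ((\<lambda>(x,y). f x * g y) z)) summable_on A \<times> B"
  proof (rule Infinite_Sum.abs_summable_on_Sigma_iff[THEN iffD2], intro conjI ballI)
    fix x assume "x \<in> A"
    show "(\<lambda>y. norm (case (x, y) of (x, y) \<Rightarrow> f x * g y)) summable_on B"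
      using summable_on_cmult_right[OF fa(2), of "norm (f x)"] by (simp add: norm_mult)
  next
    have "(\<lambda>x. norm (f x) * infsum (\<lambda>y. norm (g y)) B) summable_on A"
      using summable_on_cmult_left[OF fa(1)] by simp
    moreover have "infsum (\<lambda>y. norm (case (x, y) of (x, y) \<Rightarrow> f x * g y)) B = norm (f x) * infsum (\<lambda>y. norm (g y)) B" for x
      by (simp add: norm_mult infsum_cmult_right')
    ultimately show "(\<lambda>x. norm (infsum (\<lambda>y. norm (case (x, y) of (x, y) \<Rightarrow> f x * g y)) B)) summable_on A"
      by (simp add: abs_mult infsum_nonneg)
  qed
  thus "(\<lambda>(x,y). f x * g y) summable_on A \<times> B"
    by (simp add: summable_on_iff_abs_summable_on_complex)
qed

lemma dirichlet_has_sum: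
  fixes f g :: "nat \<Rightarrow> complex"
  assumes "(f has_sum a) {1..}" "(g has_sum b) {1..}"
  shows "((\<lambda>k. \<Sum>d\<in>{d. d dvd k}. f d * g (k div d)) has_sum (a*b)) {1..}"
proof -
  have P: "((\<lambda>(x,y). f x * g y) has_sum a*b) ({1..} \<times> {1..})"
    by (rule prod_has_sum[OF assms])
  have bij: "bij_betw (\<lambda>(k,d). (d, k div d)) (SIGMA k:{1::nat..}. {d. d dvd k}) ({1..} \<times> {1..})"
  proof (rule bij_betw_byWitness[where f' = "\<lambda>(a,b). (a*b, a)"])
    show "\<forall>x\<in>SIGMA k:{1::nat..}. {d. d dvd k}. (\<lambda>(a, b). (a * b, a)) ((\<lambda>(k, d). (d, k div d)) x) = x"
      by (auto elim!: dvdE simp: one_le_mult_iff)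
    show "\<forall>y\<in>{1::nat..} \<times> {1::nat..}. (\<lambda>(k, d). (d, k div d)) ((\<lambda>(a, b). (a * b, a)) y) = y"
      by auto
    show "(\<lambda>(k, d). (d, k div d)) ` (SIGMA k:{1::nat..}. {d. d dvd k}) \<subseteq> {1..} \<times> {1..}"
      by (auto elim!: dvdE simp: one_le_mult_iff)
    show "(\<lambda>(a, b). (a * b, a)) ` ({1::nat..} \<times> {1..}) \<subseteq> (SIGMA k:{1..}. {d. d dvd k})"
      by (auto simp: Suc_le_eq)
  qed
  have "((\<lambda>z. (\<lambda>(x,y). f x * g y) ((\<lambda>(k,d). (d, k div d)) z)) has_sum a*b) (SIGMA k:{1..}. {d. d dvd k})"
    using has_sum_reindex_bij_betw[OF bij] P by blast
  hence S: "((\<lambda>(k,d). f d * g (k div d)) has_sum a*b) (SIGMA k:{1..}. {d. d dvd k})"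
    by (simp add: case_prod_unfold)
  show ?thesis
  proof (rule has_sum_Sigma'[OF S])
    fix k :: nat assume "k \<in> {1..}"
    hence "finite {d. d dvd k}" by (intro finite_divisors_nat) auto
    thus "((\<lambda>d. case (k, d) of (k, d) \<Rightarrow> f d * g (k div d)) has_sum (\<Sum>d\<in>{d. d dvd k}. f d * g (k div d))) {d. d dvd k}"
      by simp
  qed
qed

lemma has_sum_P_imp_sums:
  fixes f :: "nat \<Rightarrow> complex"
  assumes "(f has_sum S) {1..}"
  shows "(\<lambda>k. f (Suc k)) sums S"
proof -
  have bij: "bij_betw Suc UNIV {1..}"
    by (rule bij_betw_byWitness[where f' = "\<lambda>k. k - 1"]) (auto simp: image_iff intro!: exI[of _ "_ - 1"])
  have "((\<lambda>k. f (Suc k)) has_sum S) UNIV"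
    using has_sum_reindex_bij_betw[OF bij] assms by blast
  thus ?thesis by (rule has_sum_imp_sums)
qed



definition mu :: "nat \<Rightarrow> complex" where
  "mu n = (if \<exists>S. finite S \<and> (\<forall>p\<in>S. prime p) \<and> n = \<Prod>S then (-1) ^ card (prime_factors n) else 0)"

definition sqf :: "nat \<Rightarrow> bool" where
  "sqf n \<longleftrightarrow> (\<exists>S. finite S \<and> (\<forall>p\<in>S. prime p) \<and> n = \<Prod>S)"

lemma norm_mu: "norm (mu n) \<le> 1"
  by (simp add: mu_def norm_power)

lemma pf_prod_primes:
  assumes "finite S" "\<And>p. p \<in> S \<Longrightarrow> prime (p::nat)"
  shows "prime_factors (\<Prod>S) = S"
proof -
  have "prime_factors (prod id S) = \<Union>((prime_factors \<circ> id) ` S)"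
    using assms by (intro prime_factors_prod) (auto dest: prime_gt_0_nat)
  also have "\<dots> = S" using assms by (auto simp: prime_factorization_prime)
  finally show ?thesis by simp
qed

lemma prod_primes_dvd:
  assumes "finite S" "\<And>p. p \<in> S \<Longrightarrow> prime (p::nat) \<and> p dvd n"
  shows "\<Prod>S dvd n"
  using assms
proof (induction S rule: finite_induct)
  case (insert p S)
  have pp: "prime p" "p dvd n" using insert.prems by auto
  have IH: "\<Prod>S dvd n" using insert.IH insert.prems by auto
  have "\<not> p dvd prod id S"
  proof
    assume "p dvd prod id S"
    then obtain q where q: "q \<in> S" "p dvd q"
      using prime_dvd_prod_iff[OF insert.hyps(1) pp(1), of id] by auto
    have pq: "prime q" using insert.prems q(1) by auto
    have "p = q" using primes_dvd_imp_eq[OF pp(1) pq q(2)] by simp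
    thus False using insert.hyps(2) q(1) by simp
  qed
  hence "coprime p (\<Prod>S)" using pp(1) by (simp add: prime_imp_coprime)
  hence "p * \<Prod>S dvd n" using pp(2) IH by (intro divides_mult)
  thus ?case using insert.hyps by simp
qed simp

lemma alt_sum_pow:
  assumes "finite A" "A \<noteq> {}"
  shows "(\<Sum>X\<in>Pow A. (-1::complex) ^ card X) = 0"
proof -
  have "(\<Prod>x\<in>A. (1::complex) - 1) = (\<Sum>X\<in>Pow A. (-1) ^ card X * (\<Prod>x\<in>X. 1) * (\<Prod>x\<in>A-X. 1))"
    by (rule prod_diff_conv_sum) fact
  moreover have "card A > 0" using assms card_gt_0_iff by blast
  ultimately show ?thesis by (simp add: zero_power)
qed

lemma mu_sum:
  assumes "n > 0"
  shows "(\<Sum>d\<in>{d. d dvd n}. mu d) = (if n = 1 then 1 else 0)"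
proof -
  have fin: "finite {d. d dvd n}" using assms by (simp add: finite_divisors_nat)
  have "(\<Sum>d\<in>{d. d dvd n}. mu d) = (\<Sum>d\<in>{d. d dvd n \<and> sqf d}. (-1) ^ card (prime_factors d))"
    using fin by (intro sum.mono_neutral_cong_right) (auto simp: mu_def sqf_def)
  also have "\<dots> = (\<Sum>S\<in>Pow (prime_factors n). (-1) ^ card (prime_factors (\<Prod>S)))"
  proof (rule sum.reindex_bij_betw[symmetric], rule bij_betw_byWitness[where f' = prime_factors])
    show "\<forall>S\<in>Pow (prime_factors n). prime_factors (\<Prod>S) = S"
      by (auto intro!: pf_prod_primes intro: finite_subset)
    show "\<forall>d\<in>{d. d dvd n \<and> sqf d}. \<Prod>(prime_factors d) = d"
      by (auto simp: sqf_def pf_prod_primes)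
    show "Prod ` Pow (prime_factors n) \<subseteq> {d. d dvd n \<and> sqf d}"
    proof safe
      fix S assume S: "S \<subseteq> prime_factors n"
      have "finite S" using S finite_subset by blast
      show "\<Prod>S dvd n" using S \<open>finite S\<close> by (intro prod_primes_dvd) auto
      show "sqf (\<Prod>S)" unfolding sqf_def using S \<open>finite S\<close> by auto
    qed
    show "prime_factors ` {d. d dvd n \<and> sqf d} \<subseteq> Pow (prime_factors n)"
      using assms by (auto intro: dvd_prime_factors[THEN subsetD] simp del: prod_zero_iff)
  qed
  also have "\<dots> = (\<Sum>S\<in>Pow (prime_factors n). (-1) ^ card S)"
  proof (intro sum.cong refl)
    fix S assume "S \<in> Pow (prime_factors n)"
    hence S: "S \<subseteq> prime_factors n" by simp
    have "finite S" by (rule finite_subset[OF S]) simp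
    moreover have "\<forall>p\<in>S. prime p" using S by auto
    ultimately show "(-1) ^ card (prime_factors (\<Prod>S)) = (-1::complex) ^ card S"
      by (simp add: pf_prod_primes)
  qed
  also have "\<dots> = (if n = 1 then 1 else 0)"
  proof (cases "n = 1")
    case False
    hence "prime_factors n \<noteq> {}" using assms
      by (auto simp: prime_factorization_empty_iff)
    thus ?thesis using alt_sum_pow[of "prime_factors n"] False by simp
  qed simp
  finally show ?thesis .
qed



lemma root_sum:
  assumes "N > 0"
  shows "(\<Sum>j\<in>{1..N}. exp (2 * of_real pi * \<i> * of_nat j * of_nat n / of_nat N)) =
         (if N dvd n then of_nat N else (0::complex))"
proof -
  define z where "z = exp (2 * of_real pi * \<i> * of_nat n / of_nat N)"
  have e: "exp (2 * of_real pi * \<i> * of_nat j * of_nat n / of_nat N) = z ^ j" for j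
  proof -
    have "2 * of_real pi * \<i> * of_nat j * of_nat n / of_nat N = of_nat j * (2 * of_real pi * \<i> * of_nat n / of_nat N)"
      by simp
    thus ?thesis unfolding z_def by (simp only: exp_of_nat_mult)
  qed
  have zN: "z ^ N = 1"
  proof -
    have "z ^ N = exp (of_nat N * (2 * of_real pi * \<i> * of_nat n / of_nat N))"
      unfolding z_def by (simp only: exp_of_nat_mult)
    also have "of_nat N * (2 * of_real pi * \<i> * of_nat n / of_nat N) = of_nat n * (2 * of_real pi * \<i>)"
      using assms by simp
    also have "exp \<dots> = 1" by (simp only: exp_of_nat_mult exp_two_pi_i) simp
    finally show ?thesis .
  qed
  have "(\<Sum>j\<in>{1..N}. exp (2 * of_real pi * \<i> * of_nat j * of_nat n / of_nat N)) = (\<Sum>j\<in>{1..N}. z ^ j)"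
    by (simp only: e)
  also have "\<dots> = (if N dvd n then of_nat N else 0)"
  proof (cases "N dvd n")
    case True
    then obtain q where q: "n = N * q" by auto
    have "z = exp (of_nat q * (2 * of_real pi * \<i>))"
      unfolding z_def q using assms by (simp add: field_simps)
    also have "\<dots> = 1" by (simp only: exp_of_nat_mult exp_two_pi_i) simp
    finally show ?thesis using True by simp
  next
    case False
    have "z \<noteq> 1"
    proof
      assume "z = 1"
      then obtain m :: int where m: "Im (2 * of_real pi * \<i> * of_nat n / of_nat N) = of_int (2 * m) * pi"
        unfolding z_def exp_eq_1 by blast
      hence "2 * pi * real n / real N = 2 * real_of_int m * pi" by simp
      hence "real n = real_of_int m * real N" using assms by (simp add: field_simps)
      hence "int n = m * int N" by (metis of_int_eq_iff of_int_mult of_int_of_nat_eq)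
      hence "int N dvd int n" by simp
      thus False using False by simp
    qed
    have "(\<Sum>j\<in>{1..N}. z ^ j) = (\<Sum>j<N. z ^ Suc j)"
      by (rule sum.reindex_bij_witness[where i = Suc and j = "\<lambda>j. j - 1"]) auto
    also have "\<dots> = z * (\<Sum>j<N. z ^ j)" by (simp add: sum_distrib_left)
    also have "(\<Sum>j<N. z ^ j) = (z ^ N - 1) / (z - 1)" using \<open>z \<noteq> 1\<close> by (rule geometric_sum)
    also have "\<dots> = 0" using zN by simp
    finally show ?thesis using False by simp
  qed
  finally show ?thesis .
qed

lemma lcm_pow_nat: "lcm (a::nat) b ^ r = lcm (a ^ r) (b ^ r)"
proof (cases "a = 0 \<or> b = 0 \<or> r = 0")
  case True thus ?thesis by (cases r) auto
next
  case False
  hence g0: "gcd a b ^ r \<noteq> 0" by simp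
  have "gcd a b ^ r * lcm a b ^ r = (a * b) ^ r"
    by (metis power_mult_distrib prod_gcd_lcm_nat)
  also have "\<dots> = gcd (a^r) (b^r) * lcm (a^r) (b^r)"
    by (metis power_mult_distrib prod_gcd_lcm_nat)
  also have "gcd (a^r) (b^r) = gcd a b ^ r" by simp
  finally have "gcd a b ^ r * lcm a b ^ r = gcd a b ^ r * lcm (a^r) (b^r)" .
  thus ?thesis using mult_left_cancel[OF g0] by blast
qed

definition DD :: "nat \<Rightarrow> nat \<Rightarrow> nat \<Rightarrow> nat set" where
  "DD r k m = {d. d dvd k \<and> d ^ r dvd m}"

definition gg :: "nat \<Rightarrow> nat \<Rightarrow> nat \<Rightarrow> nat" where
  "gg r k m = Max (DD r k m)"

context
  fixes r k m :: nat
  assumes r: "r > 0" and k: "k > 0"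
begin

lemma DD_fin: "finite (DD r k m)"
  unfolding DD_def using k by (intro finite_subset[OF _ finite_divisors_nat[of k]]) auto

lemma one_DD: "1 \<in> DD r k m" by (simp add: DD_def)

lemma gg_in: "gg r k m \<in> DD r k m"
  unfolding gg_def using DD_fin one_DD by (intro Max_in) auto

lemma gg_pos: "gg r k m > 0"
  using gg_in k by (auto simp: DD_def intro!: Nat.gr0I)

lemma DD_dvd_gg: assumes "d \<in> DD r k m" shows "d dvd gg r k m"
proof -
  define g where "g = gg r k m"
  have gD: "g \<in> DD r k m" using gg_in by (simp add: g_def)
  have "lcm d g \<in> DD r k m"
    using assms gD by (auto simp: DD_def lcm_pow_nat intro: lcm_least)
  hence "lcm d g \<le> g" unfolding g_def gg_def by (rule Max_ge[OF DD_fin])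
  moreover have "g dvd lcm d g" by simp
  moreover have "lcm d g > 0" using gg_pos assms k by (auto simp: g_def DD_def lcm_pos_nat intro!: Nat.gr0I)
  ultimately have "lcm d g = g" by (meson dvd_imp_le le_antisym)
  thus ?thesis by (metis dvd_lcm1 g_def)
qed

lemma DD_eq: "DD r k m = {d. d dvd gg r k m}"
proof safe
  fix d assume "d dvd gg r k m"
  moreover have "gg r k m dvd k" "gg r k m ^ r dvd m" using gg_in by (auto simp: DD_def)
  ultimately show "d \<in> DD r k m" unfolding DD_def
    by (auto intro: dvd_trans dvd_power_same)
qed (rule DD_dvd_gg)

lemma gcd_pow_eq: "gcd_pow r m (k ^ r) = gg r k m ^ r"
  unfolding gcd_pow_def
proof (rule Greatest_equality)
  show "(\<exists>d. gg r k m ^ r = d ^ r) \<and> gg r k m ^ r dvd m \<and> gg r k m ^ r dvd k ^ r"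
    using gg_in by (auto simp: DD_def dvd_power_same)
next
  fix y assume "(\<exists>d. y = d ^ r) \<and> y dvd m \<and> y dvd k ^ r"
  then obtain d where d: "y = d ^ r" "d ^ r dvd m" "d ^ r dvd k ^ r" by auto
  hence "d dvd k" using r by simp
  hence "d \<in> DD r k m" using d by (simp add: DD_def)
  hence "d dvd gg r k m" by (rule DD_dvd_gg)
  hence "d \<le> gg r k m" using gg_pos by (simp add: dvd_imp_le)
  thus "y \<le> gg r k m ^ r" using d by (simp add: power_mono)
qed

lemma mu_indicator:
  "(\<Sum>d\<in>{d. d dvd k}. if d ^ r dvd m then mu d else 0) = (if gcd_pow r m (k ^ r) = 1 then 1 else 0)"
proof -
  have fin: "finite {d. d dvd k}" using k by (simp add: finite_divisors_nat)
  have "(\<Sum>d\<in>{d. d dvd k}. if d ^ r dvd m then mu d else 0) = (\<Sum>d\<in>DD r k m. mu d)"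
    using fin by (subst sum.inter_filter[symmetric]) (auto simp: DD_def intro!: sum.cong)
  also have "\<dots> = (\<Sum>d\<in>{d. d dvd gg r k m}. mu d)" by (simp add: DD_eq)
  also have "\<dots> = (if gg r k m = 1 then 1 else 0)" using gg_pos by (rule mu_sum)
  also have "gg r k m = 1 \<longleftrightarrow> gcd_pow r m (k ^ r) = 1"
    using r by (simp add: gcd_pow_eq power_eq_1_iff)
  finally show ?thesis .
qed

end

lemma inner_sum:
  assumes r: "r > 0" and k: "k > 0" and d: "d dvd k"
  shows "(\<Sum>m\<in>{1..k^r}. if d^r dvd m then exp (2 * of_real pi * \<i> * of_nat m * of_nat n / of_nat (k ^ r)) else 0)
         = (if (k div d)^r dvd n then of_nat ((k div d)^r) else (0::complex))"
proof -
  define N where "N = (k div d)^r"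
  have d0: "d > 0" using d k by (auto intro!: Nat.gr0I)
  have kd: "k = d * (k div d)" using d by simp
  have kd0: "k div d > 0" using k kd by (metis gr0I mult_0_right)
  have N0: "N > 0" using kd0 by (simp add: N_def)
  have K: "k ^ r = d ^ r * N" unfolding N_def by (subst kd) (simp add: power_mult_distrib)
  have "(\<Sum>m\<in>{1..k^r}. if d^r dvd m then exp (2 * of_real pi * \<i> * of_nat m * of_nat n / of_nat (k ^ r)) else 0)
      = (\<Sum>m\<in>{m\<in>{1..k^r}. d^r dvd m}. exp (2 * of_real pi * \<i> * of_nat m * of_nat n / of_nat (k ^ r)))"
    by (rule sum.inter_filter[symmetric]) simp
  also have "{m\<in>{1..k^r}. d^r dvd m} = (\<lambda>j. d^r * j) ` {1..N}"
  proof safe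
    fix m assume m: "m \<in> {1..k^r}" "d^r dvd m"
    then obtain j where j: "m = d^r * j" by auto
    have "j \<in> {1..N}" using m j K d0 by (auto simp: Suc_le_eq intro!: Nat.gr0I)
    thus "m \<in> (\<lambda>j. d^r * j) ` {1..N}" using j by auto
  next
    fix j assume "j \<in> {1..N}"
    thus "d^r * j \<in> {1..k^r}" using K d0 by (auto simp: Suc_le_eq)
  qed simp
  also have "(\<Sum>m\<in>(\<lambda>j. d^r * j) ` {1..N}. exp (2 * of_real pi * \<i> * of_nat m * of_nat n / of_nat (k ^ r)))
      = (\<Sum>j\<in>{1..N}. exp (2 * of_real pi * \<i> * of_nat (d^r * j) * of_nat n / of_nat (k ^ r)))"
    using d0 by (subst sum.reindex) (auto simp: inj_on_def)
  also have "\<dots> = (\<Sum>j\<in>{1..N}. exp (2 * of_real pi * \<i> * of_nat j * of_nat n / of_nat N))"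
  proof (intro sum.cong refl)
    fix j
    have "(2 * of_real pi * \<i> * of_nat (d^r * j) * of_nat n / of_nat (k ^ r) :: complex)
        = 2 * of_real pi * \<i> * of_nat j * of_nat n / of_nat N"
      unfolding K using d0 by (simp add: field_simps)
    thus "exp (2 * of_real pi * \<i> * of_nat (d^r * j) * of_nat n / of_nat (k ^ r)) =
          exp (2 * of_real pi * \<i> * of_nat j * of_nat n / of_nat N)" by simp
  qed
  also have "\<dots> = (if N dvd n then of_nat N else 0)" using N0 by (rule root_sum)
  finally show ?thesis by (simp add: N_def)
qed

lemma ram_formula:
  assumes r: "r > 0" and k: "k > 0"
  shows "ramanujan_r r n k = (\<Sum>d\<in>{d. d dvd k}. mu d * (if (k div d)^r dvd n then of_nat ((k div d)^r) else 0))"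
proof -
  define w where "w m = exp (2 * of_real pi * \<i> * of_nat m * of_nat n / of_nat (k ^ r))" for m
  have fin: "finite {d. d dvd k}" using k by (simp add: finite_divisors_nat)
  have "ramanujan_r r n k = (\<Sum>m\<in>{m. 1 \<le> m \<and> m \<le> k ^ r \<and> gcd_pow r m (k ^ r) = 1}. w m)"
    unfolding ramanujan_r_def w_def ..
  also have "\<dots> = (\<Sum>m\<in>{1..k^r}. (if gcd_pow r m (k ^ r) = 1 then 1 else 0) * w m)"
    by (rule sum.mono_neutral_cong_left) auto
  also have "\<dots> = (\<Sum>m\<in>{1..k^r}. \<Sum>d\<in>{d. d dvd k}. mu d * (if d ^ r dvd m then w m else 0))"
  proof (intro sum.cong refl)
    fix m
    have "(if gcd_pow r m (k ^ r) = 1 then 1 else 0) * w m = (\<Sum>d\<in>{d. d dvd k}. if d ^ r dvd m then mu d else 0) * w m"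
      by (simp add: mu_indicator[OF r k])
    also have "\<dots> = (\<Sum>d\<in>{d. d dvd k}. mu d * (if d ^ r dvd m then w m else 0))"
      by (simp add: sum_distrib_right) (intro sum.cong refl, simp)
    finally show "(if gcd_pow r m (k ^ r) = 1 then 1 else 0) * w m = (\<Sum>d\<in>{d. d dvd k}. mu d * (if d ^ r dvd m then w m else 0))" .
  qed
  also have "\<dots> = (\<Sum>d\<in>{d. d dvd k}. mu d * (\<Sum>m\<in>{1..k^r}. if d ^ r dvd m then w m else 0))"
    by (subst sum.swap) (simp add: sum_distrib_left)
  also have "\<dots> = (\<Sum>d\<in>{d. d dvd k}. mu d * (if (k div d)^r dvd n then of_nat ((k div d)^r) else 0))"
  proof (intro sum.cong refl)
    fix d assume "d \<in> {d. d dvd k}"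
    hence "(\<Sum>m\<in>{1..k^r}. if d ^ r dvd m then w m else 0) = (if (k div d)^r dvd n then of_nat ((k div d)^r) else 0)"
      unfolding w_def by (intro inner_sum[OF r k]) simp
    thus "mu d * (\<Sum>m\<in>{1..k^r}. if d ^ r dvd m then w m else 0) = mu d * (if (k div d)^r dvd n then of_nat ((k div d)^r) else 0)"
      by simp
  qed
  finally show ?thesis .
qed



lemma npow_nz: "0 < a \<Longrightarrow> (of_nat a :: complex) powr s \<noteq> 0"
  by (simp add: npow)

lemma npow_add: "0 < a \<Longrightarrow> (of_nat a :: complex) powr (x + y) = of_nat a powr x * of_nat a powr y"
  by (simp add: npow distrib_right exp_add)

lemma bound_term:
  fixes f :: complex
  assumes "j \<ge> 1" "norm f \<le> 1"
  shows "norm (f / of_nat j powr s) \<le> 1 * real j powr (- Re s)"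
proof -
  have "norm (f / of_nat j powr s) = norm f / real j powr Re s"
    using assms by (simp add: norm_divide norm_npow)
  also have "\<dots> \<le> 1 / real j powr Re s"
    using assms by (intro divide_right_mono) auto
  also have "\<dots> = 1 * real j powr (- Re s)" by (simp add: powr_minus_divide)
  finally show ?thesis .
qed

lemma sums_to_has_sum:
  fixes f :: "nat \<Rightarrow> complex"
  assumes "f summable_on {1..}" "(\<lambda>k. f (Suc k)) sums S"
  shows "(f has_sum S) {1..}"
proof -
  have "(f has_sum infsum f {1..}) {1..}" using assms(1) by (rule has_sum_infsum)
  moreover from this have "(\<lambda>k. f (Suc k)) sums infsum f {1..}" by (rule has_sum_P_imp_sums)
  ultimately show ?thesis using assms(2) sums_unique2 by metis
qed

lemma Li_has_sum:
  assumes "1 < Re s" "norm t \<le> 1"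
  shows "((\<lambda>j. t^j / of_nat j powr s) has_sum polylog s t) {1..}"
proof (rule sums_to_has_sum)
  show "(\<lambda>j. t^j / of_nat j powr s) summable_on {1..}"
    using assms by (intro summable_bound[of "Re s" _ 1] bound_term) (auto simp: norm_power power_le_one)
  hence "summable (\<lambda>k. t ^ Suc k / of_nat (Suc k) powr s)"
    using has_sum_P_imp_sums[OF has_sum_infsum] sums_summable by blast
  thus "(\<lambda>k. t ^ Suc k / of_nat (Suc k) powr s) sums polylog s t"
    unfolding polylog_def by (rule summable_sums)
qed

lemma zeta_has_sum:
  assumes "1 < Re s"
  shows "((\<lambda>j. 1 / of_nat j powr s) has_sum zeta_fun s) {1..}"
proof (rule sums_to_has_sum)
  show "(\<lambda>j. 1 / of_nat j powr s) summable_on {1..}"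
    using assms by (intro summable_bound[of "Re s" _ 1] bound_term) auto
  hence "summable (\<lambda>k. 1 / of_nat (Suc k) powr s)"
    using has_sum_P_imp_sums[OF has_sum_infsum] sums_summable by blast
  thus "(\<lambda>k. 1 / of_nat (Suc k) powr s) sums zeta_fun s"
    unfolding zeta_fun_def by (rule summable_sums)
qed

lemma mu_summable:
  assumes "1 < Re s"
  shows "(\<lambda>j. mu j / of_nat j powr s) summable_on {1..}"
  using assms by (intro summable_bound[of "Re s" _ 1] bound_term norm_mu) auto

lemma mu_zeta:
  assumes "1 < Re s"
  shows "infsum (\<lambda>j. mu j / of_nat j powr s) {1..} * zeta_fun s = 1"
proof -
  have D: "((\<lambda>k. \<Sum>d\<in>{d. d dvd k}. (mu d / of_nat d powr s) * (1 / of_nat (k div d) powr s))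
          has_sum (infsum (\<lambda>j. mu j / of_nat j powr s) {1..} * zeta_fun s)) {1..}"
    by (rule dirichlet_has_sum[OF has_sum_infsum[OF mu_summable[OF assms]] zeta_has_sum[OF assms]])
  have eqk: "(\<Sum>d\<in>{d. d dvd k}. (mu d / of_nat d powr s) * (1 / of_nat (k div d) powr s)) = (if k = 1 then 1 else 0)"
    if k: "k \<in> {1..}" for k
  proof -
    have "(\<Sum>d\<in>{d. d dvd k}. (mu d / of_nat d powr s) * (1 / of_nat (k div d) powr s))
        = (\<Sum>d\<in>{d. d dvd k}. mu d / of_nat k powr s)"
    proof (intro sum.cong refl)
      fix d assume "d \<in> {d. d dvd k}"
      hence d: "d dvd k" by simp
      have d0: "d > 0" "k div d > 0" using d k by (auto intro!: Nat.gr0I elim!: dvdE)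
      have "(of_nat k :: complex) powr s = of_nat (d * (k div d)) powr s" using d by simp
      also have "\<dots> = of_nat d powr s * of_nat (k div d) powr s" using d0 by (rule npow_mult)
      finally show "(mu d / of_nat d powr s) * (1 / of_nat (k div d) powr s) = mu d / of_nat k powr s"
        by simp
    qed
    also have "\<dots> = (\<Sum>d\<in>{d. d dvd k}. mu d) / of_nat k powr s" by (simp add: sum_divide_distrib)
    also have "\<dots> = (if k = 1 then 1 else 0)" using k by (simp add: mu_sum)
    finally show ?thesis .
  qed
  have "((\<lambda>k::nat. if k = 1 then 1 else 0) has_sum (infsum (\<lambda>j. mu j / of_nat j powr s) {1..} * zeta_fun s)) {1..}"
    using D by (rule has_sum_cong[THEN iffD1, rotated]) (simp only: eqk)
  moreover have "((\<lambda>k::nat. if k = 1 then 1 else 0) has_sum (1::complex)) {1..}"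
  proof -
    have "((\<lambda>k::nat. if k = 1 then 1 else 0) has_sum (1::complex)) {1}"
      using has_sum_finite[of "{1::nat}" "\<lambda>k. if k = 1 then 1 else (0::complex)"] by simp
    thus ?thesis by (rule has_sum_cong_neutral[THEN iffD1, rotated -1]) auto
  qed
  ultimately show "infsum (\<lambda>j. mu j / of_nat j powr s) {1..} * zeta_fun s = 1"
    using has_sum_unique by blast
qed

lemma dconv_eq:
  assumes k: "k \<ge> 1"
  shows "(\<Sum>d\<in>{d. d dvd k}. (a d / of_nat d powr s) * (b (k div d) / of_nat (k div d) powr s))
       = (\<Sum>d\<in>{d. d dvd k}. a d * b (k div d)) / (of_nat k powr s :: complex)"
proof -
  have "(\<Sum>d\<in>{d. d dvd k}. (a d / of_nat d powr s) * (b (k div d) / of_nat (k div d) powr s))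
        = (\<Sum>d\<in>{d. d dvd k}. a d * b (k div d) / of_nat k powr s)"
  proof (intro sum.cong refl)
    fix d assume "d \<in> {d. d dvd k}"
    hence d: "d dvd k" by simp
    have d0: "d > 0" "k div d > 0" using d k by (auto intro!: Nat.gr0I elim!: dvdE)
    have "(of_nat k :: complex) powr s = of_nat (d * (k div d)) powr s" using d by simp
    also have "\<dots> = of_nat d powr s * of_nat (k div d) powr s" using d0 by (rule npow_mult)
    finally show "(a d / of_nat d powr s) * (b (k div d) / of_nat (k div d) powr s) = a d * b (k div d) / of_nat k powr s"
      by simp
  qed
  also have "\<dots> = (\<Sum>d\<in>{d. d dvd k}. a d * b (k div d)) / of_nat k powr s" by (simp add: sum_divide_distrib)
  finally show ?thesis .
qed

lemma sigma_has_sum: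
  assumes r: "r > 0" and n: "n > 0"
  shows "((\<lambda>j. (if j^r dvd n then of_nat (j^r) else 0) / of_nat j powr (of_nat r * p + of_nat r))
           has_sum sigma_r (-p) n r) {1..}"
proof -
  define SS where "SS = {d::nat. 1 \<le> d \<and> d ^ r dvd n}"
  define F where "F j = (if j^r dvd n then of_nat (j^r) else 0) / (of_nat j powr (of_nat r * p + of_nat r) :: complex)" for j
  have "SS \<subseteq> {1..n}"
  proof
    fix d assume "d \<in> SS"
    hence d: "1 \<le> d" "d ^ r dvd n" by (auto simp: SS_def)
    have "d \<le> d ^ r" using d r by (simp add: self_le_power)
    also have "\<dots> \<le> n" using d n by (simp add: dvd_imp_le)
    finally show "d \<in> {1..n}" using d by simp
  qed
  hence fin: "finite SS" by (rule finite_subset) simp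
  have eq: "F d = of_nat d powr (of_nat r * (- p))" if "d \<in> SS" for d
  proof -
    have d: "d > 0" "d ^ r dvd n" using that by (auto simp: SS_def)
    have "(of_nat d :: complex) powr (of_nat r * p + of_nat r) = of_nat d powr (of_nat r * p) * of_nat d powr of_nat r"
      using d(1) by (rule npow_add)
    also have "(of_nat d :: complex) powr of_nat r = of_nat d ^ r" using d by (intro powr_nat') simp
    finally have "F d = 1 / of_nat d powr (of_nat r * p)"
      using d by (simp add: F_def npow_nz)
    also have "\<dots> = of_nat d powr (of_nat r * (- p))"
      using d by (simp add: npow exp_minus field_simps)
    finally show ?thesis .
  qed
  have "(F has_sum sum F SS) SS" using fin by (rule has_sum_finite)
  also have "sum F SS = sigma_r (-p) n r"
    unfolding sigma_r_def SS_def[symmetric] by (intro sum.cong refl eq)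
  finally have "(F has_sum sigma_r (-p) n r) SS" .
  hence "(F has_sum sigma_r (-p) n r) {1..}"
    by (rule has_sum_cong_neutral[THEN iffD1, rotated -1]) (auto simp: SS_def F_def)
  thus ?thesis unfolding F_def .
qed

theorem proposition4:
  fixes r n :: nat and p t :: complex
  assumes "r > 0" and "n > 0"
    and "Re (of_nat r * (p + 1)) > 1"
    and "norm t \<le> 1"
  shows "(\<lambda>k. M_r r t n (Suc k) / of_nat (Suc k) powr (of_nat r * p)) sums
           (polylog (of_nat r * p + of_nat r) t / zeta_fun (of_nat r * p + of_nat r)
              * sigma_r (- p) n r)"
proof -
  define s where "s = of_nat r * p + of_nat r"
  have hs: "1 < Re s" using assms(3) by (simp add: s_def distrib_left)
  define MU where "MU = infsum (\<lambda>j. mu j / of_nat j powr s) {1..}"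
  have hU: "((\<lambda>j. mu j / of_nat j powr s) has_sum MU) {1..}"
    unfolding MU_def using mu_summable[OF hs] by (rule has_sum_infsum)
  have MZ: "MU * zeta_fun s = 1" unfolding MU_def by (rule mu_zeta[OF hs])
  hence Z0: "zeta_fun s \<noteq> 0" by auto
  have MU1: "MU = 1 / zeta_fun s" using MZ Z0 by (simp add: field_simps)
  have hF: "((\<lambda>j. (if j^r dvd n then of_nat (j^r) else 0) / of_nat j powr s) has_sum sigma_r (-p) n r) {1..}"
    unfolding s_def by (rule sigma_has_sum[OF assms(1,2)])
  have hC0: "((\<lambda>k. \<Sum>d\<in>{d. d dvd k}. (mu d / of_nat d powr s) *
               ((if (k div d)^r dvd n then of_nat ((k div d)^r) else 0) / of_nat (k div d) powr s))
            has_sum MU * sigma_r (-p) n r) {1..}"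
    by (rule dirichlet_has_sum[OF hU hF])
  have hC: "((\<lambda>k. ramanujan_r r n k / of_nat k powr s) has_sum MU * sigma_r (-p) n r) {1..}"
  proof (rule has_sum_cong[THEN iffD1, OF _ hC0])
    fix k :: nat assume k: "k \<in> {1..}"
    show "(\<Sum>d\<in>{d. d dvd k}. (mu d / of_nat d powr s) *
               ((if (k div d)^r dvd n then of_nat ((k div d)^r) else 0) / of_nat (k div d) powr s))
          = ramanujan_r r n k / of_nat k powr s"
      using k dconv_eq[of k mu s "\<lambda>e. if e^r dvd n then of_nat (e^r) else 0"] ram_formula[OF assms(1), of k n]
      by simp
  qed
  have hA: "((\<lambda>j. t^j / of_nat j powr s) has_sum polylog s t) {1..}"
    by (rule Li_has_sum[OF hs assms(4)])
  have hT0: "((\<lambda>k. \<Sum>d\<in>{d. d dvd k}. (t^d / of_nat d powr s) * (ramanujan_r r n (k div d) / of_nat (k div d) powr s))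
            has_sum polylog s t * (MU * sigma_r (-p) n r)) {1..}"
    by (rule dirichlet_has_sum[OF hA hC])
  have hT: "((\<lambda>k. M_r r t n k / of_nat k powr (of_nat r * p)) has_sum polylog s t * (MU * sigma_r (-p) n r)) {1..}"
  proof (rule has_sum_cong[THEN iffD1, OF _ hT0])
    fix k :: nat assume k: "k \<in> {1..}"
    hence k0: "k > 0" by simp
    have ks: "(of_nat k :: complex) powr s = of_nat k powr (of_nat r * p) * of_nat (k ^ r)"
    proof -
      have "(of_nat k :: complex) powr s = of_nat k powr (of_nat r * p) * of_nat k powr of_nat r"
        unfolding s_def using k0 by (rule npow_add)
      also have "(of_nat k :: complex) powr of_nat r = of_nat k ^ r" using k0 by (intro powr_nat') simp
      finally show ?thesis by simp
    qed
    have "(\<Sum>d\<in>{d. d dvd k}. (t^d / of_nat d powr s) * (ramanujan_r r n (k div d) / of_nat (k div d) powr s))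
        = (\<Sum>d\<in>{d. d dvd k}. t^d * ramanujan_r r n (k div d)) / of_nat k powr s"
      using k by (intro dconv_eq) simp
    also have "\<dots> = M_r r t n k / of_nat k powr (of_nat r * p)"
      unfolding M_r_def ks using k0 npow_nz[OF k0]
      by (simp add: field_simps mult.commute)
    finally show "(\<Sum>d\<in>{d. d dvd k}. (t^d / of_nat d powr s) * (ramanujan_r r n (k div d) / of_nat (k div d) powr s))
        = M_r r t n k / of_nat k powr (of_nat r * p)" .
  qed
  have "(\<lambda>k. M_r r t n (Suc k) / of_nat (Suc k) powr (of_nat r * p)) sums (polylog s t * (MU * sigma_r (-p) n r))"
    using has_sum_P_imp_sums[OF hT] by simp
  moreover have "polylog s t * (MU * sigma_r (-p) n r) = polylog s t / zeta_fun s * sigma_r (-p) n r"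
    by (simp add: MU1)
  ultimately show ?thesis by (simp add: s_def)
qed


end
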